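(* Let $n,q$ be positive integers, $\sigma>0$, $s>0$, $\mu=s^2/\sigma^2$, and let $h(\mathbf X\mid\hat{\mathbf W})$ be the average differential entropy of the Gaussian mixture described in the context. Let $F(\mathbf z_1,\dots,\mathbf z_q)=\ln q^{-1}\sum_{l=1}^q\exp\{-\frac\mu2\mathbf z_l\cdot\mathbf z_l\}$ and let $\hat M^{(q)}$ be the $q\times q$ matrix with entries $M^{(q)}_{ij}=\delta_{ij}-\frac1q+\mu\,\delta_{iq}\delta_{jq}$. Then $$h(\mathbf X\mid\hat{\mathbf W})=\frac n2\ln2\pi\sigma^2-\Big(\frac\mu q\Big)^{n/2}(2\pi)^{-qn/2}\int\exp\Big\{-\frac12\hat{\mathbf z}^{\mathrm T}\hat M^{(q)}\hat{\mathbf z}\Big\}F(\mathbf z_1,\dots,\mathbf z_q)\,d\mathbf z_1\cdots d\mathbf z_q.$$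
   Context: $\mathbf W_1,\dots,\mathbf W_q$ are i.i.d. Gaussian in $\mathbb R^n$ with mean $0$, covariance $s^2\mathbf 1_n$; given $\hat{\mathbf W}=\hat{\mathbf w}=(\mathbf w_1,\dots,\mathbf w_q)$, $\mathbf X\in\mathbb R^n$ has density $(2\pi\sigma^2)^{-n/2}\frac1q\sum_{j=1}^q\exp\{-\|\mathbf x-\mathbf w_j\|^2/(2\sigma^2)\}$; $h(\mathbf X\mid\hat{\mathbf W})=\mathbb E_{\hat{\mathbf w}}[h(\mathbf X\mid\hat{\mathbf W}=\hat{\mathbf w})]$ with $h$ the differential entropy (natural log). The integral is over $(\mathbb R^n)^q$, $\hat{\mathbf z}=(\mathbf z_1,\dots,\mathbf z_q)$, and $\hat{\mathbf z}^{\mathrm T}\hat M\hat{\mathbf z}:=\sum_{i,j}M_{ij}\,\mathbf z_i\cdot\mathbf z_j$. *)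

theory Defs
  imports "HOL-Probability.Probability"
begin

text \<open>Conditional density of X in R^n given the centres w = (w_1,...,w_q):
  an equal-weight mixture of q isotropic Gaussians of variance sigma^2.
  R^n is real^'n (n = CARD('n)), the index set {1..q} is the finite type 'q.\<close>
definition mix_density :: "real \<Rightarrow> (real^'n::finite)^'q::finite \<Rightarrow> real^'n \<Rightarrow> real" where
  "mix_density \<sigma> w x =
     (2 * pi * \<sigma>\<^sup>2) powr (- real CARD('n) / 2) *
     ((1 / real CARD('q)) * (\<Sum>j\<in>UNIV. exp (- (norm (x - w $ j))\<^sup>2 / (2 * \<sigma>\<^sup>2))))"

definition diff_entropy :: "(real^'n::finite \<Rightarrow> real) \<Rightarrow> real" where
  "diff_entropy f = - (\<integral>x. f x * ln (f x) \<partial>lborel)"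

definition centres_density :: "real \<Rightarrow> (real^'n::finite)^'q::finite \<Rightarrow> real" where
  "centres_density s w = (\<Prod>j\<in>UNIV. \<Prod>k\<in>UNIV. normal_density 0 s (w $ j $ k))"

definition cond_entropy :: "real \<Rightarrow> real \<Rightarrow> 'n::finite itself \<Rightarrow> 'q::finite itself \<Rightarrow> real" where
  "cond_entropy \<sigma> s (_ :: 'n itself) (_ :: 'q itself) =
     (\<integral>w. centres_density s (w :: (real^'n)^'q) * diff_entropy (mix_density \<sigma> w) \<partial>lborel)"

text \<open>The matrix M^(q) with distinguished (q-th) index jq.\<close>
definition Mq :: "real \<Rightarrow> 'q::finite \<Rightarrow> 'q \<Rightarrow> 'q \<Rightarrow> real" where
  "Mq \<mu> jq i j = (if i = j then 1 else 0) - 1 / real CARD('q)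
      + \<mu> * (if i = jq \<and> j = jq then 1 else 0)"

definition Fq :: "real \<Rightarrow> (real^'n::finite)^'q::finite \<Rightarrow> real" where
  "Fq \<mu> z = ln ((1 / real CARD('q)) * (\<Sum>l\<in>UNIV. exp (- (\<mu> / 2) * (z $ l \<bullet> z $ l))))"

definition quad_form :: "('q::finite \<Rightarrow> 'q \<Rightarrow> real) \<Rightarrow> (real^'n::finite)^'q \<Rightarrow> real" where
  "quad_form M z = (\<Sum>i\<in>UNIV. \<Sum>j\<in>UNIV. M i j * (z $ i \<bullet> z $ j))"

end

theory Submission
  imports Defs
begin


lemma norm_sq_basis:
  fixes x :: "'a::euclidean_space"
  shows "(norm x)\<^sup>2 = (\<Sum>b\<in>Basis. (x \<bullet> b)\<^sup>2)"
  unfolding power2_norm_eq_inner by (subst euclidean_inner) (simp add: power2_eq_square)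

lemma gauss_nn:
  fixes t :: "'a::euclidean_space" and a :: real
  assumes a: "a > 0"
  shows "(\<integral>\<^sup>+x. ennreal (exp (- (norm (x - t))\<^sup>2 / (2*a\<^sup>2))) \<partial>lborel) = ennreal (sqrt (2*pi*a\<^sup>2) ^ DIM('a))"
proof -
  define C where "C = sqrt (2*pi*a\<^sup>2)"
  have C: "C > 0" using a by (simp add: C_def)
  have eq: "exp (- (norm (x - t))\<^sup>2 / (2*a\<^sup>2)) = C ^ DIM('a) * (\<Prod>b\<in>Basis. normal_density (t \<bullet> b) a (x \<bullet> b))" for x
  proof -
    have "(\<Prod>b\<in>Basis. normal_density (t \<bullet> b) a (x \<bullet> b)) = (\<Prod>b\<in>Basis. (1/C) * exp (- (x \<bullet> b - t \<bullet> b)\<^sup>2 / (2*a\<^sup>2)))"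
      by (simp add: normal_density_def C_def)
    also have "\<dots> = exp (\<Sum>b\<in>Basis. - (x \<bullet> b - t \<bullet> b)\<^sup>2 / (2*a\<^sup>2)) / C ^ DIM('a)"
      by (simp add: prod_dividef exp_sum)
    also have "(\<Sum>b\<in>Basis. - (x \<bullet> b - t \<bullet> b)\<^sup>2 / (2*a\<^sup>2)) = - (norm (x - t))\<^sup>2 / (2*a\<^sup>2)"
      by (simp add: norm_sq_basis[of "x - t"] inner_diff_left sum_divide_distrib[symmetric] sum_negf)
    finally show ?thesis using C by (simp add: field_simps power_one_over)
  qed
  have "(\<integral>\<^sup>+x. ennreal (exp (- (norm (x - t))\<^sup>2 / (2*a\<^sup>2))) \<partial>lborel)
      = (\<integral>\<^sup>+x. ennreal (C ^ DIM('a)) * (\<Prod>b\<in>Basis. ennreal (normal_density (t \<bullet> b) a (x \<bullet> b))) \<partial>lborel)"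
    unfolding eq using C by (simp add: ennreal_mult' prod_ennreal less_imp_le prod_nonneg)
  also have "\<dots> = ennreal (C ^ DIM('a)) * (\<integral>\<^sup>+x. (\<Prod>b\<in>Basis. ennreal (normal_density (t \<bullet> b) a (x \<bullet> b))) \<partial>lborel)"
    by (rule nn_integral_cmult) measurable
  also have "(\<integral>\<^sup>+x. (\<Prod>b\<in>Basis. ennreal (normal_density (t \<bullet> b) a (x \<bullet> b))) \<partial>lborel)
     = (\<Prod>b\<in>Basis. (\<integral>\<^sup>+x. ennreal (normal_density (t \<bullet> b) a x) \<partial>lborel))"
    by (rule nn_integral_lborel_prod) auto
  also have "\<dots> = 1"
  proof -
    have "(\<integral>\<^sup>+x. ennreal (normal_density m a x) \<partial>lborel) = 1" for m
      using a by (subst nn_integral_eq_integral) auto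
    then show ?thesis by simp
  qed
  finally show ?thesis by (simp add: C_def)
qed


lemma basis_prod_vec:
  fixes g :: "'a::euclidean_space^'q::finite \<Rightarrow> 'c::comm_monoid_mult"
  shows "(\<Prod>b\<in>Basis. g b) = (\<Prod>i\<in>UNIV. \<Prod>u\<in>Basis. g (axis i u))"
proof -
  have "(\<Prod>b\<in>Basis. g b) = (\<Prod>i\<in>UNIV. prod g (\<Union>u\<in>Basis. {axis i u}))"
    unfolding Basis_vec_def
    by (rule prod.UNION_disjoint) (auto simp: axis_eq_axis)
  also have "\<dots> = (\<Prod>i\<in>UNIV. \<Prod>u\<in>Basis. g (axis i u))"
  proof (rule prod.cong[OF refl])
    fix i :: 'q
    have "(\<Union>u\<in>(Basis::'a set). {axis i u}) = axis i ` (Basis::'a set)" by auto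
    moreover have "inj_on (axis i) (Basis::'a set)" by (auto simp: inj_on_def axis_eq_axis)
    ultimately show "prod g (\<Union>u\<in>Basis. {axis i u}) = (\<Prod>u\<in>Basis. g (axis i u))"
      by (simp add: prod.reindex)
  qed
  finally show ?thesis .
qed

lemma mem_box_vec:
  fixes x a b :: "'a::euclidean_space^'q::finite"
  shows "x \<in> box a b \<longleftrightarrow> (\<forall>l. \<forall>u\<in>Basis. a$l \<bullet> u < x$l \<bullet> u \<and> x$l \<bullet> u < b$l \<bullet> u)"
  by (auto simp: mem_box Basis_vec_def inner_axis)

lemma lborel_perm:
  fixes p :: "'q::finite \<Rightarrow> 'q"
  assumes p: "bij p"
  shows "distr lborel borel (\<lambda>y::('a::euclidean_space)^'q. \<chi> l. y $ p l) = lborel"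
proof (rule lborel_eqI[symmetric])
  define T where "T = (\<lambda>y::('a::euclidean_space)^'q. \<chi> l. y $ p l)"
  define Ti where "Ti = (\<lambda>y::('a::euclidean_space)^'q. \<chi> l. y $ inv p l)"
  have Tm[measurable]: "T \<in> borel_measurable borel"
    unfolding T_def by (intro borel_measurable_continuous_onI) (intro continuous_intros)
  have pinv: "p (inv p m) = m" "inv p (p m) = m" for m
    using p by (auto simp: bij_def surj_f_inv_f inv_f_f)
  fix lo up :: "('a::euclidean_space)^'q"
  assume le: "\<And>b. b \<in> Basis \<Longrightarrow> lo \<bullet> b \<le> up \<bullet> b"
  have pre: "T -` box lo up = box (Ti lo) (Ti up)"
  proof -
    have "(\<forall>l. \<forall>u\<in>Basis. lo$l \<bullet> u < x$(p l) \<bullet> u \<and> x$(p l) \<bullet> u < up$l \<bullet> u) \<longleftrightarrow>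
          (\<forall>m. \<forall>u\<in>Basis. lo$(inv p m) \<bullet> u < x$m \<bullet> u \<and> x$m \<bullet> u < up$(inv p m) \<bullet> u)" for x
      by (metis pinv)
    then show ?thesis by (auto simp: mem_box_vec T_def Ti_def)
  qed
  have prodeq: "(\<Prod>b\<in>Basis. Ti z \<bullet> b) = (\<Prod>b\<in>Basis. z \<bullet> b)" for z
  proof -
    have "(\<Prod>b\<in>Basis. Ti z \<bullet> b) = (\<Prod>i\<in>UNIV. \<Prod>u\<in>Basis. z $ inv p i \<bullet> u)"
      by (simp add: basis_prod_vec inner_axis Ti_def)
    also have "\<dots> = (\<Prod>i\<in>UNIV. \<Prod>u\<in>Basis. z $ i \<bullet> u)"
      using prod.reindex_bij_betw[of "inv p" UNIV UNIV "\<lambda>i. \<Prod>u\<in>Basis. z $ i \<bullet> u"] p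
      by (simp add: bij_imp_bij_inv)
    also have "\<dots> = (\<Prod>b\<in>Basis. z \<bullet> b)"
      by (simp add: basis_prod_vec inner_axis)
    finally show ?thesis .
  qed
  have le2: "\<forall>b\<in>Basis. Ti lo \<bullet> b \<le> Ti up \<bullet> b"
  proof -
    have "lo$l \<bullet> u \<le> up$l \<bullet> u" if "u \<in> Basis" for l u
      using le[of "axis l u"] that by (auto simp: Basis_vec_def inner_axis)
    then show ?thesis by (auto simp: Basis_vec_def inner_axis Ti_def)
  qed
  have "Ti up - Ti lo = Ti (up - lo)" by (simp add: Ti_def vec_eq_iff)
  then show "emeasure (distr lborel borel (\<lambda>y::('a::euclidean_space)^'q. \<chi> l. y $ p l)) (box lo up) = (\<Prod>b\<in>Basis. (up - lo) \<bullet> b)"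
    using le2 by (simp add: T_def[symmetric] emeasure_distr pre emeasure_lborel_box_eq prodeq)
qed simp



lemma norm_vec_sq:
  fixes v :: "'a::real_inner^'q::finite"
  shows "(norm v)\<^sup>2 = (\<Sum>l\<in>UNIV. (norm (v$l))\<^sup>2)"
  by (simp add: power2_norm_eq_inner inner_vec_def)

lemma centres_eq:
  fixes w :: "(real^'n::finite)^'q::finite"
  assumes s: "s > 0"
  shows "centres_density s w = (1 / sqrt (2*pi* s\<^sup>2)) ^ (CARD('q) * CARD('n)) * exp (- (norm w)\<^sup>2 / (2* s\<^sup>2))"
proof -
  define C where "C = 1 / sqrt (2*pi* s\<^sup>2)"
  have "centres_density s w = (\<Prod>j\<in>UNIV. \<Prod>k\<in>UNIV. C * exp (- (w$j$k)\<^sup>2 / (2* s\<^sup>2)))"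
    by (simp add: centres_density_def normal_density_def C_def)
  also have "\<dots> = (\<Prod>j\<in>UNIV. C ^ CARD('n) * exp (\<Sum>k\<in>UNIV. - (w$j$k)\<^sup>2 / (2* s\<^sup>2)))"
    by (simp add: prod.distrib exp_sum)
  also have "\<dots> = C ^ (CARD('q) * CARD('n)) * exp (\<Sum>j\<in>UNIV. \<Sum>k\<in>UNIV. - (w$j$k)\<^sup>2 / (2* s\<^sup>2))"
    by (simp add: prod.distrib exp_sum power_mult mult.commute)
  also have "(\<Sum>j\<in>UNIV. \<Sum>k\<in>UNIV. - (w$j$k)\<^sup>2 / (2* s\<^sup>2)) = - (norm w)\<^sup>2 / (2* s\<^sup>2)"
    by (simp add: norm_vec_sq[of w] norm_vec_sq[of "w$_"] sum_divide_distrib[symmetric] sum_negf)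
  finally show ?thesis by (simp add: C_def)
qed

lemma quad_eq:
  fixes y :: "(real^'n::finite)^'q::finite"
  shows "quad_form (Mq \<mu> j) y = (\<Sum>i\<in>UNIV. y$i \<bullet> y$i) - (\<Sum>i\<in>UNIV. y$i) \<bullet> (\<Sum>i\<in>UNIV. y$i) / real CARD('q) + \<mu> * (y$j \<bullet> y$j)"
proof -
  have "quad_form (Mq \<mu> j) y = (\<Sum>i\<in>UNIV. \<Sum>l\<in>UNIV. (if i = l then y$i \<bullet> y$l else 0) - (y$i \<bullet> y$l) / real CARD('q)
        + (if i = j \<and> l = j then \<mu> * (y$i \<bullet> y$l) else 0))"
    unfolding quad_form_def Mq_def by (intro sum.cong refl) (auto simp: algebra_simps)
  also have "\<dots> = (\<Sum>i\<in>UNIV. \<Sum>l\<in>UNIV. (if i = l then y$i \<bullet> y$l else 0)) - (\<Sum>i\<in>UNIV. \<Sum>l\<in>UNIV. y$i \<bullet> y$l) / real CARD('q)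
        + (\<Sum>i\<in>UNIV. \<Sum>l\<in>UNIV. (if i = j \<and> l = j then \<mu> * (y$i \<bullet> y$l) else 0))"
    by (simp only: sum.distrib sum_subtractf sum_divide_distrib)
  also have "(\<Sum>i\<in>UNIV. \<Sum>l\<in>UNIV. (if i = l then y$i \<bullet> y$l else 0)) = (\<Sum>i\<in>UNIV. y$i \<bullet> y$i)"
    by simp
  also have "(\<Sum>i\<in>UNIV. \<Sum>l\<in>UNIV. (if i = j \<and> l = j then \<mu> * (y$i \<bullet> y$l) else 0))
      = (\<Sum>i\<in>UNIV. if i = j then (\<Sum>l\<in>UNIV. if l = j then \<mu> * (y$i \<bullet> y$l) else 0) else 0)"
    by (intro sum.cong) auto
  also have "\<dots> = \<mu> * (y$j \<bullet> y$j)" by simp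
  also have "(\<Sum>i\<in>UNIV. \<Sum>l\<in>UNIV. y$i \<bullet> y$l) = (\<Sum>i\<in>UNIV. y$i) \<bullet> (\<Sum>i\<in>UNIV. y$i)"
    by (simp add: inner_sum_left inner_sum_right) (rule sum.swap)
  finally show ?thesis .
qed

lemma square_complete:
  fixes x :: "real^'n::finite" and y :: "(real^'n)^'q::finite"
  shows "(norm ((\<chi> l. x) + (- s) *\<^sub>R y))\<^sup>2 =
     real CARD('q) * (norm (x - (s / real CARD('q)) *\<^sub>R (\<Sum>l\<in>UNIV. y$l)))\<^sup>2
     + s\<^sup>2 * ((\<Sum>i\<in>UNIV. y$i \<bullet> y$i) - (\<Sum>i\<in>UNIV. y$i) \<bullet> (\<Sum>i\<in>UNIV. y$i) / real CARD('q))"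
proof -
  define Y where "Y = (\<Sum>l\<in>UNIV. y$l)"
  define Q where "Q = real CARD('q)"
  have Q: "Q > 0" by (simp add: Q_def)
  have "(norm ((\<chi> l. x) + (- s) *\<^sub>R y))\<^sup>2 = (\<Sum>l\<in>UNIV. (norm (x - s *\<^sub>R y$l))\<^sup>2)"
    by (simp add: norm_vec_sq)
  also have "\<dots> = (\<Sum>l\<in>UNIV. x \<bullet> x - 2 * s * (x \<bullet> y$l) + s\<^sup>2 * (y$l \<bullet> y$l))"
  proof (intro sum.cong refl)
    fix l
    show "(norm (x - s *\<^sub>R y$l))\<^sup>2 = x \<bullet> x - 2 * s * (x \<bullet> y$l) + s\<^sup>2 * (y$l \<bullet> y$l)"
      unfolding power2_norm_eq_inner by (simp add: inner_diff_left inner_diff_right inner_commute algebra_simps power2_eq_square)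
  qed
  also have "\<dots> = Q * (x \<bullet> x) - 2 * s * (x \<bullet> Y) + s\<^sup>2 * (\<Sum>l\<in>UNIV. y$l \<bullet> y$l)"
    by (simp add: sum.distrib sum_subtractf sum_distrib_left inner_sum_right Y_def Q_def)
  also have "\<dots> = Q * (norm (x - (s / Q) *\<^sub>R Y))\<^sup>2 + s\<^sup>2 * ((\<Sum>i\<in>UNIV. y$i \<bullet> y$i) - Y \<bullet> Y / Q)"
    using Q unfolding power2_norm_eq_inner by (simp add: inner_diff_left inner_diff_right inner_commute field_simps power2_eq_square)
  finally show ?thesis by (simp add: Y_def Q_def)
qed



definition gau :: "real \<Rightarrow> 'a::real_normed_vector \<Rightarrow> real" where
  "gau a v = exp (- (norm v)\<^sup>2 / (2 * a\<^sup>2))"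

definition Ssum :: "real \<Rightarrow> (real^'n::finite)^'q::finite \<Rightarrow> real^'n \<Rightarrow> real" where
  "Ssum \<sigma> w x = (1 / real CARD('q)) * (\<Sum>j\<in>UNIV. gau \<sigma> (x - w$j))"

lemma sqrt_pow_powr: "z > 0 \<Longrightarrow> sqrt z ^ k = z powr (real k / 2)"
  by (simp add: powr_half_sqrt[symmetric] powr_power)

lemma gau_pos: "gau a v > 0" by (simp add: gau_def)

lemma gau_cont[continuous_intros]: "continuous_on S f \<Longrightarrow> continuous_on S (\<lambda>x. gau a (f x))"
  unfolding gau_def divide_inverse by (intro continuous_intros)

lemma gau_hasint:
  fixes t :: "'a::euclidean_space"
  assumes "a > 0"
  shows "has_bochner_integral lborel (\<lambda>x. gau a (x - t)) (sqrt (2*pi*a\<^sup>2) ^ DIM('a))"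
proof (rule has_bochner_integral_nn_integral)
  show "(\<lambda>x. gau a (x - t)) \<in> borel_measurable lborel"
    unfolding measurable_lborel2 by (intro borel_measurable_continuous_onI continuous_intros)
  show "(\<integral>\<^sup>+x. ennreal (gau a (x - t)) \<partial>lborel) = ennreal (sqrt (2*pi*a\<^sup>2) ^ DIM('a))"
    unfolding gau_def using gauss_nn[OF assms] .
qed (auto simp: gau_def)

lemma gau_int:
  fixes t :: "'a::euclidean_space" assumes "a > 0"
  shows "integrable lborel (\<lambda>x. gau a (x - t))"
  using gau_hasint[OF assms, of t] by (simp add: has_bochner_integral_iff)

lemma gau_integral:
  fixes t :: "'a::euclidean_space" assumes "a > 0"
  shows "(\<integral>x. gau a (x - t) \<partial>lborel) = sqrt (2*pi*a\<^sup>2) ^ DIM('a)"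
  using gau_hasint[OF assms, of t] by (simp add: has_bochner_integral_iff)

lemma Ssum_pos: "Ssum \<sigma> w x > 0"
  unfolding Ssum_def by (intro mult_pos_pos sum_pos) (auto simp: gau_pos)

lemma Ssum_nz[simp]: "Ssum \<sigma> w x \<noteq> 0"
  using Ssum_pos by (metis less_irrefl)

lemma Ssum_le1:
  fixes w :: "(real^'n::finite)^'q::finite"
  shows "Ssum \<sigma> w x \<le> 1"
proof -
  have "(\<Sum>j\<in>UNIV. gau \<sigma> (x - w$j)) \<le> (\<Sum>j\<in>(UNIV::'q set). 1)"
    by (intro sum_mono) (simp add: gau_def)
  then show ?thesis unfolding Ssum_def by (simp add: field_simps)
qed

lemma Ssum_cont[continuous_intros]:
  "continuous_on S f \<Longrightarrow> continuous_on S g \<Longrightarrow> continuous_on S (\<lambda>p. Ssum \<sigma> (f p) (g p))"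
  unfolding Ssum_def by (intro continuous_intros)

lemma negln_Ssum_cont[continuous_intros]:
  "continuous_on S f \<Longrightarrow> continuous_on S g \<Longrightarrow> continuous_on S (\<lambda>p. ln (Ssum \<sigma> (f p) (g p)))"
  by (intro continuous_on_ln continuous_intros) auto

lemma mix_eq:
  fixes w :: "(real^'n::finite)^'q::finite"
  shows "mix_density \<sigma> w x = (2 * pi * \<sigma>\<^sup>2) powr (- real CARD('n) / 2) * Ssum \<sigma> w x"
  by (simp add: mix_density_def Ssum_def gau_def)

lemma negln_bound:
  fixes w :: "(real^'n::finite)^'q::finite"
  assumes "\<sigma> > 0"
  shows "- ln (Ssum \<sigma> w x) \<le> ln (real CARD('q)) + (norm (x - w$j))\<^sup>2 / (2 * \<sigma>\<^sup>2)"
proof -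
  have "(1 / real CARD('q)) * gau \<sigma> (x - w$j) \<le> Ssum \<sigma> w x"
    unfolding Ssum_def
    by (intro mult_left_mono member_le_sum) (auto simp: gau_pos less_imp_le)
  then have "ln ((1 / real CARD('q)) * gau \<sigma> (x - w$j)) \<le> ln (Ssum \<sigma> w x)"
    by (subst ln_le_cancel_iff) (auto simp: gau_pos Ssum_pos)
  then show ?thesis
    by (simp add: ln_mult ln_div gau_def gau_pos)
qed

lemma exp_bound: "(d::real) \<ge> 0 \<Longrightarrow> exp (- d) * d \<le> 2 * exp (- d / 2)"
proof -
  assume d: "d \<ge> 0"
  have "d / 2 \<le> exp (d / 2)" using exp_ge_add_one_self[of "d/2"] by linarith
  then have "exp (- d) * d \<le> exp (- d) * (2 * exp (d / 2))"
    by (intro mult_left_mono) auto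
  also have "\<dots> = 2 * exp (- d / 2)"
    by (simp add: exp_add[symmetric])
  finally show ?thesis .
qed



lemma A_C1:
  assumes "\<sigma> > 0"
  shows "(2 * pi * \<sigma>\<^sup>2) powr (- real k / 2) * sqrt (2*pi*\<sigma>\<^sup>2) ^ k = 1"
  using assms by (simp add: sqrt_pow_powr powr_add[symmetric])

lemma mix_int:
  fixes w :: "(real^'n::finite)^'q::finite"
  assumes s: "\<sigma> > 0"
  shows "integrable lborel (mix_density \<sigma> w)" "(\<integral>x. mix_density \<sigma> w x \<partial>lborel) = 1"
proof -
  define A where "A = (2 * pi * \<sigma>\<^sup>2) powr (- real CARD('n) / 2)"
  have eq: "mix_density \<sigma> w = (\<lambda>x. A * ((1 / real CARD('q)) * (\<Sum>j\<in>UNIV. gau \<sigma> (x - w$j))))"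
    by (simp add: fun_eq_iff mix_eq Ssum_def A_def)
  show "integrable lborel (mix_density \<sigma> w)"
    unfolding eq by (intro integrable_mult_right Bochner_Integration.integrable_sum) (rule gau_int[OF s])
  have "(\<integral>x. mix_density \<sigma> w x \<partial>lborel) = A * ((1 / real CARD('q)) * (\<Sum>j\<in>(UNIV::'q set). sqrt (2*pi*\<sigma>\<^sup>2) ^ CARD('n)))"
    unfolding eq by (simp add: Bochner_Integration.integral_sum gau_int gau_integral s)
  also have "\<dots> = A * sqrt (2*pi*\<sigma>\<^sup>2) ^ CARD('n)" by simp
  also have "\<dots> = 1" unfolding A_def using A_C1[OF s] by simp
  finally show "(\<integral>x. mix_density \<sigma> w x \<partial>lborel) = 1" .
qed

definition Bnd :: "real \<Rightarrow> nat \<Rightarrow> nat \<Rightarrow> real" where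
  "Bnd \<sigma> n q = (2 * pi * \<sigma>\<^sup>2) powr (- real n / 2) *
      (ln (real q) * sqrt (2*pi*\<sigma>\<^sup>2) ^ n + 2 * sqrt (2*pi*(sqrt 2 * \<sigma>)\<^sup>2) ^ n)"

lemma ent_int:
  fixes w :: "(real^'n::finite)^'q::finite"
  assumes s: "\<sigma> > 0"
  shows "integrable lborel (\<lambda>x. mix_density \<sigma> w x * (- ln (Ssum \<sigma> w x)))"
    and "0 \<le> (\<integral>x. mix_density \<sigma> w x * (- ln (Ssum \<sigma> w x)) \<partial>lborel)"
    and "(\<integral>x. mix_density \<sigma> w x * (- ln (Ssum \<sigma> w x)) \<partial>lborel) \<le> Bnd \<sigma> CARD('n) CARD('q)"
proof -
  define A where "A = (2 * pi * \<sigma>\<^sup>2) powr (- real CARD('n) / 2)"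
  have A: "A > 0" using s by (simp add: A_def)
  define Q where "Q = real CARD('q)"
  have Q: "Q \<ge> 1" by (simp add: Q_def)
  define hb where "hb x = A * ((1 / Q) * (\<Sum>j\<in>UNIV. ln Q * gau \<sigma> (x - w$j) + 2 * gau (sqrt 2 * \<sigma>) (x - w$j)))" for x
  have nn: "0 \<le> mix_density \<sigma> w x * (- ln (Ssum \<sigma> w x))" for x
    using Ssum_le1[of \<sigma> w x] Ssum_pos[of \<sigma> w x] A
    by (intro mult_nonneg_nonneg) (auto simp: mix_eq A_def[symmetric] less_imp_le)
  have le: "mix_density \<sigma> w x * (- ln (Ssum \<sigma> w x)) \<le> hb x" for x
  proof -
    have "mix_density \<sigma> w x * (- ln (Ssum \<sigma> w x)) = A * ((1 / Q) * (\<Sum>j\<in>UNIV. gau \<sigma> (x - w$j) * (- ln (Ssum \<sigma> w x))))"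
      by (simp add: mix_eq Ssum_def A_def Q_def sum_negf sum_distrib_right[symmetric])
    also have "\<dots> \<le> hb x"
      unfolding hb_def
    proof (intro mult_left_mono sum_mono)
      fix j
      define d where "d = (norm (x - w$j))\<^sup>2 / (2 * \<sigma>\<^sup>2)"
      have d: "d \<ge> 0" by (simp add: d_def)
      have "gau \<sigma> (x - w$j) * (- ln (Ssum \<sigma> w x)) \<le> gau \<sigma> (x - w$j) * (ln Q + d)"
        using negln_bound[OF s, of w x j] by (intro mult_left_mono) (auto simp: d_def Q_def gau_pos less_imp_le)
      also have "\<dots> = ln Q * gau \<sigma> (x - w$j) + exp (- d) * d"
        by (simp add: gau_def d_def algebra_simps)
      also have "exp (- d) * d \<le> 2 * exp (- d / 2)" using exp_bound[OF d] .
      also have "exp (- d / 2) = gau (sqrt 2 * \<sigma>) (x - w$j)"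
        by (simp add: gau_def d_def power_mult_distrib)
      finally show "gau \<sigma> (x - w$j) * (- ln (Ssum \<sigma> w x)) \<le> ln Q * gau \<sigma> (x - w$j) + 2 * gau (sqrt 2 * \<sigma>) (x - w$j)"
        by simp
    qed (use A Q in auto)
    finally show ?thesis .
  qed
  have hbint: "integrable lborel hb"
    unfolding hb_def using s
    by (intro integrable_mult_right Bochner_Integration.integrable_sum Bochner_Integration.integrable_add gau_int) auto
  have hbval: "(\<integral>x. hb x \<partial>lborel) = Bnd \<sigma> CARD('n) CARD('q)"
  proof -
    have "(\<integral>x. hb x \<partial>lborel) = A * ((1 / Q) * (\<Sum>j\<in>(UNIV::'q set). ln Q * sqrt (2*pi*\<sigma>\<^sup>2) ^ CARD('n) + 2 * sqrt (2*pi*(sqrt 2 * \<sigma>)\<^sup>2) ^ CARD('n)))"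
      unfolding hb_def using s
      by (simp add: Bochner_Integration.integral_sum Bochner_Integration.integral_add gau_int gau_integral Bochner_Integration.integrable_add)
    also have "\<dots> = Bnd \<sigma> CARD('n) CARD('q)"
      using Q by (simp add: Bnd_def A_def Q_def)
    finally show ?thesis .
  qed
  have meas: "(\<lambda>x. mix_density \<sigma> w x * (- ln (Ssum \<sigma> w x))) \<in> borel_measurable lborel"
    unfolding measurable_lborel2 mix_eq by (intro borel_measurable_continuous_onI continuous_intros)
  show int: "integrable lborel (\<lambda>x. mix_density \<sigma> w x * (- ln (Ssum \<sigma> w x)))"
  proof (rule Bochner_Integration.integrable_bound[OF hbint meas], rule AE_I2)
    fix x
    show "norm (mix_density \<sigma> w x * (- ln (Ssum \<sigma> w x))) \<le> norm (hb x)"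
      using nn[of x] le[of x] unfolding real_norm_def by arith
  qed
  show "0 \<le> (\<integral>x. mix_density \<sigma> w x * (- ln (Ssum \<sigma> w x)) \<partial>lborel)"
    by (rule integral_nonneg_AE) (use nn in auto)
  show "(\<integral>x. mix_density \<sigma> w x * (- ln (Ssum \<sigma> w x)) \<partial>lborel) \<le> Bnd \<sigma> CARD('n) CARD('q)"
    unfolding hbval[symmetric] by (intro integral_mono int hbint le)
qed

lemma dent_eq:
  fixes w :: "(real^'n::finite)^'q::finite"
  assumes s: "\<sigma> > 0"
  shows "diff_entropy (mix_density \<sigma> w) = real CARD('n) / 2 * ln (2 * pi * \<sigma>\<^sup>2)
           + (\<integral>x. mix_density \<sigma> w x * (- ln (Ssum \<sigma> w x)) \<partial>lborel)"
proof -
  define A where "A = (2 * pi * \<sigma>\<^sup>2) powr (- real CARD('n) / 2)"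
  have A: "A > 0" using s by (simp add: A_def)
  have lnA: "ln A = - (real CARD('n) / 2 * ln (2 * pi * \<sigma>\<^sup>2))"
    using s by (simp add: A_def ln_powr)
  have eq: "mix_density \<sigma> w x * ln (mix_density \<sigma> w x) = ln A * mix_density \<sigma> w x - mix_density \<sigma> w x * (- ln (Ssum \<sigma> w x))" for x
  proof -
    have m: "mix_density \<sigma> w x = A * Ssum \<sigma> w x" by (simp add: mix_eq A_def)
    show ?thesis unfolding m using A Ssum_pos[of \<sigma> w x] by (simp add: ln_mult algebra_simps)
  qed
  have "(\<integral>x. mix_density \<sigma> w x * ln (mix_density \<sigma> w x) \<partial>lborel)
      = ln A * (\<integral>x. mix_density \<sigma> w x \<partial>lborel) - (\<integral>x. mix_density \<sigma> w x * (- ln (Ssum \<sigma> w x)) \<partial>lborel)"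
    unfolding eq using mix_int[OF s, of w] ent_int[OF s, of w] by simp
  then show ?thesis
    unfolding diff_entropy_def using mix_int[OF s, of w] lnA by simp
qed



definition Phi :: "real \<Rightarrow> real \<Rightarrow> (real^'n::finite)^'q::finite \<Rightarrow> real^'n \<Rightarrow> real" where
  "Phi \<sigma> s w x = centres_density s w * mix_density \<sigma> w x * (- ln (Ssum \<sigma> w x))"

lemma centres_cont[continuous_intros]:
  "continuous_on S f \<Longrightarrow> continuous_on S (\<lambda>p. centres_density s (f p))"
  unfolding centres_density_def normal_density_def divide_inverse by (intro continuous_intros)

lemma Phi_cont[continuous_intros]:
  "continuous_on S f \<Longrightarrow> continuous_on S g \<Longrightarrow> continuous_on S (\<lambda>p. Phi \<sigma> s (f p) (g p))"
  unfolding Phi_def mix_eq by (intro continuous_intros)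

lemma meas_pair:
  fixes f :: "'a::euclidean_space \<Rightarrow> 'b::euclidean_space \<Rightarrow> real"
  assumes "continuous_on UNIV (\<lambda>p. f (fst p) (snd p))"
  shows "(\<lambda>(a,b). ennreal (f a b)) \<in> borel_measurable (lborel \<Otimes>\<^sub>M lborel)"
proof -
  have [measurable]: "(\<lambda>p. f (fst p) (snd p)) \<in> borel_measurable borel"
    by (rule borel_measurable_continuous_onI[OF assms])
  have "(\<lambda>p. ennreal (f (fst p) (snd p))) \<in> borel_measurable borel" by measurable
  then show ?thesis unfolding lborel_prod measurable_lborel2 by (simp add: case_prod_beta')
qed

lemma meas_cont:
  fixes f :: "'a::euclidean_space \<Rightarrow> real"
  assumes "continuous_on UNIV f"
  shows "(\<lambda>a. ennreal (f a)) \<in> borel_measurable lborel" "f \<in> borel_measurable lborel"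
proof -
  have [measurable]: "f \<in> borel_measurable borel"
    by (rule borel_measurable_continuous_onI[OF assms])
  show "(\<lambda>a. ennreal (f a)) \<in> borel_measurable lborel" unfolding measurable_lborel2 by measurable
  show "f \<in> borel_measurable lborel" unfolding measurable_lborel2 by measurable
qed

lemma nn_affine:
  fixes g :: "'a::euclidean_space \<Rightarrow> ennreal"
  assumes g[measurable]: "g \<in> borel_measurable borel" and c: "c \<noteq> 0"
  shows "(\<integral>\<^sup>+w. g w \<partial>lborel) = ennreal (\<bar>c\<bar>^DIM('a)) * (\<integral>\<^sup>+y. g (t + c *\<^sub>R y) \<partial>lborel)"
  by (subst lborel_affine[OF c, of t]) (simp add: nn_integral_density nn_integral_distr nn_integral_cmult)

definition Dq :: "(real^'n::finite)^'q::finite \<Rightarrow> real" where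
  "Dq y = (\<Sum>i\<in>UNIV. y$i \<bullet> y$i) - (\<Sum>i\<in>UNIV. y$i) \<bullet> (\<Sum>i\<in>UNIV. y$i) / real CARD('q)"

lemma Phi_subst:
  fixes x :: "real^'n::finite" and y :: "(real^'n)^'q::finite"
  assumes s: "s > 0" and sg: "\<sigma> > 0" and mu: "\<mu> = s\<^sup>2 / \<sigma>\<^sup>2"
  shows "Phi \<sigma> s ((\<chi> l. x) + (- s) *\<^sub>R y) x =
     ((1 / sqrt (2 * pi * s\<^sup>2)) ^ (CARD('q) * CARD('n)) * (2 * pi * \<sigma>\<^sup>2) powr (- real CARD('n) / 2)
      * exp (- Dq y / 2) * (1 / real CARD('q) * (\<Sum>j\<in>UNIV. exp (- (\<mu> / 2) * (y$j \<bullet> y$j)))) * (- Fq \<mu> y))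
     * gau (s / sqrt (real CARD('q))) (x - (s / real CARD('q)) *\<^sub>R (\<Sum>l\<in>UNIV. y$l))"
proof -
  define Q where "Q = real CARD('q)"
  have Q: "Q > 0" by (simp add: Q_def)
  have S: "Ssum \<sigma> ((\<chi> l. x) + (- s) *\<^sub>R y) x = 1 / Q * (\<Sum>j\<in>UNIV. exp (- (\<mu> / 2) * (y$j \<bullet> y$j)))"
  proof -
    have "gau \<sigma> (x - ((\<chi> l. x) + (- s) *\<^sub>R y) $ j) = exp (- (\<mu> / 2) * (y$j \<bullet> y$j))" for j
      using sg s by (simp add: gau_def mu dot_square_norm power2_eq_square field_simps)
    then show ?thesis by (simp add: Ssum_def Q_def)
  qed
  have F: "ln (1 / Q * (\<Sum>j\<in>UNIV. exp (- (\<mu> / 2) * (y$j \<bullet> y$j)))) = Fq \<mu> y"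
    unfolding Fq_def Q_def ..
  have C: "exp (- (norm ((\<chi> l. x) + (- s) *\<^sub>R y))\<^sup>2 / (2 * s\<^sup>2)) =
      exp (- Dq y / 2) * gau (s / sqrt Q) (x - (s / Q) *\<^sub>R (\<Sum>l\<in>UNIV. y$l))"
  proof -
    have "- (norm ((\<chi> l. x) + (- s) *\<^sub>R y))\<^sup>2 / (2 * s\<^sup>2) = - Dq y / 2 + - (norm (x - (s / Q) *\<^sub>R (\<Sum>l\<in>UNIV. y$l)))\<^sup>2 / (2 * (s / sqrt Q)\<^sup>2)"
      unfolding square_complete Dq_def Q_def[symmetric] using s Q by (simp add: field_simps)
    then show ?thesis by (simp add: gau_def mult_exp_exp)
  qed
  show ?thesis
    unfolding Phi_def centres_eq[OF s] mix_eq S F C Q_def[symmetric] by (simp add: algebra_simps)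
qed



lemma Fsum_pos: "0 < (1 / real CARD('q::finite)) * (\<Sum>l\<in>(UNIV::'q set). exp (g l))"
  by (intro mult_pos_pos sum_pos) auto

lemma Fsum_nz: "(1 / real CARD('q::finite)) * (\<Sum>l\<in>(UNIV::'q set). exp (g l)) \<noteq> 0"
  using Fsum_pos[of g] by linarith

lemma Fq_cont[continuous_intros]:
  "continuous_on S f \<Longrightarrow> continuous_on S (\<lambda>p. Fq \<mu> (f p))"
  unfolding Fq_def
  apply (intro continuous_on_ln continuous_intros ballI)
    apply assumption
   apply assumption
  apply (rule Fsum_nz)
  done

lemma quad_cont[continuous_intros]:
  "continuous_on S f \<Longrightarrow> continuous_on S (\<lambda>p. quad_form M (f p))"
  unfolding quad_form_def by (intro continuous_intros)

lemma Fq_nonpos: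
  fixes y :: "(real^'n::finite)^'q::finite"
  assumes "\<mu> \<ge> 0"
  shows "Fq \<mu> y \<le> 0"
proof -
  have "(\<Sum>l\<in>UNIV. exp (- (\<mu> / 2) * (y$l \<bullet> y$l))) \<le> (\<Sum>l\<in>(UNIV::'q set). 1)"
    using assms by (intro sum_mono) (auto intro!: mult_nonneg_nonneg)
  then have "(1 / real CARD('q)) * (\<Sum>l\<in>UNIV. exp (- (\<mu> / 2) * (y$l \<bullet> y$l))) \<le> 1"
    by (simp add: field_simps)
  moreover have "0 < (1 / real CARD('q)) * (\<Sum>l\<in>UNIV. exp (- (\<mu> / 2) * (y$l \<bullet> y$l)))"
    by (rule Fsum_pos)
  ultimately show ?thesis unfolding Fq_def by simp
qed

definition swp :: "'q \<Rightarrow> 'q \<Rightarrow> 'q \<Rightarrow> 'q" where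
  "swp a b l = (if l = a then b else if l = b then a else l)"

lemma swp_bij: "bij (swp a b)"
proof -
  have "swp a b \<circ> swp a b = id" by (auto simp: swp_def fun_eq_iff)
  then show ?thesis using o_bij by blast
qed

lemma swp_bij': "bij_betw (swp a b) UNIV UNIV"
  using swp_bij by (simp add: bij_def bij_betw_def)

lemma sum_swp: "(\<Sum>i\<in>UNIV. g (swp a b i)) = (\<Sum>i\<in>UNIV. g i)"
  by (rule sum.reindex_bij_betw[OF swp_bij'])

lemma R_perm:
  fixes j jq :: "'q::finite"
  shows "(\<integral>\<^sup>+y. ennreal (exp (- (1/2) * quad_form (Mq \<mu> j) y) * (- Fq \<mu> (y :: (real^'n::finite)^'q))) \<partial>lborel)
       = (\<integral>\<^sup>+y. ennreal (exp (- (1/2) * quad_form (Mq \<mu> jq) y) * (- Fq \<mu> (y :: (real^'n::finite)^'q))) \<partial>lborel)"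
proof -
  define P where "P = (\<lambda>y::(real^'n)^'q. \<chi> l. y $ swp j jq l)"
  define g where "g = (\<lambda>y::(real^'n)^'q. ennreal (exp (- (1/2) * quad_form (Mq \<mu> jq) y) * (- Fq \<mu> y)))"
  have Pm: "P \<in> borel_measurable lborel"
    unfolding P_def measurable_lborel2 by (intro borel_measurable_continuous_onI continuous_intros)
  have gm: "g \<in> borel_measurable borel"
  proof -
    have [measurable]: "(\<lambda>y::(real^'n)^'q. exp (- (1/2) * quad_form (Mq \<mu> jq) y) * (- Fq \<mu> y)) \<in> borel_measurable borel"
      by (intro borel_measurable_continuous_onI continuous_intros)
    show ?thesis unfolding g_def by measurable
  qed
  have swjq: "swp j jq jq = j" by (simp add: swp_def)
  have gP: "g (P y) = ennreal (exp (- (1/2) * quad_form (Mq \<mu> j) y) * (- Fq \<mu> y))" for y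
  proof -
    have "quad_form (Mq \<mu> jq) (P y) = quad_form (Mq \<mu> j) y"
      unfolding quad_eq P_def
      using sum_swp[of "\<lambda>i. y$i \<bullet> y$i" j jq] sum_swp[of "\<lambda>i. y$i" j jq] swjq
      by simp
    moreover have "Fq \<mu> (P y) = Fq \<mu> y"
      unfolding Fq_def P_def using sum_swp[of "\<lambda>l. exp (- (\<mu> / 2) * (y$l \<bullet> y$l))" j jq] by simp
    ultimately show ?thesis unfolding g_def by simp
  qed
  have "(\<integral>\<^sup>+y. g y \<partial>lborel) = (\<integral>\<^sup>+y. g y \<partial>(distr lborel borel P))"
  proof -
    have "distr lborel borel P = (lborel :: ((real^'n)^'q) measure)"
      unfolding P_def by (rule lborel_perm[OF swp_bij])
    then show ?thesis by simp
  qed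
  also have "\<dots> = (\<integral>\<^sup>+y. g (P y) \<partial>lborel)"
    by (rule nn_integral_distr) (use Pm gm in \<open>auto simp: measurable_lborel2\<close>)
  finally show ?thesis unfolding gP by (simp add: g_def)
qed



lemma main_nn:
  fixes jq :: "'q::finite"
  assumes s: "s > 0" and sg: "\<sigma> > 0" and mu: "\<mu> = s\<^sup>2 / \<sigma>\<^sup>2"
  shows "(\<integral>\<^sup>+w. (\<integral>\<^sup>+x. ennreal (Phi \<sigma> s (w :: (real^'n::finite)^'q) x) \<partial>lborel) \<partial>lborel) =
    ennreal (s ^ (CARD('q) * CARD('n)) * (1 / sqrt (2 * pi * s\<^sup>2)) ^ (CARD('q) * CARD('n)) * (2 * pi * \<sigma>\<^sup>2) powr (- real CARD('n) / 2)
       * sqrt (2*pi*(s / sqrt (real CARD('q)))\<^sup>2) ^ CARD('n))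
    * (\<integral>\<^sup>+y. ennreal (exp (- (1/2) * quad_form (Mq \<mu> jq) y) * (- Fq \<mu> (y :: (real^'n)^'q))) \<partial>lborel)"
proof -
  define Q where "Q = real CARD('q)"
  have Q: "Q > 0" by (simp add: Q_def)
  define Cs where "Cs = (1 / sqrt (2 * pi * s\<^sup>2)) ^ (CARD('q) * CARD('n))"
  define A where "A = (2 * pi * \<sigma>\<^sup>2) powr (- real CARD('n) / 2)"
  define Cg where "Cg = sqrt (2*pi*(s / sqrt Q)\<^sup>2) ^ CARD('n)"
  define Sc where "Sc = s ^ (CARD('q) * CARD('n))"
  define Kc where "Kc = Sc * Cs * A * Cg"
  define R where "R = (\<lambda>j. \<integral>\<^sup>+y. ennreal (exp (- (1/2) * quad_form (Mq \<mu> j) y) * (- Fq \<mu> (y :: (real^'n)^'q))) \<partial>lborel)"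
  define G where "G = (\<lambda>y::(real^'n)^'q. Cs * A * exp (- Dq y / 2) * (1 / Q * (\<Sum>j\<in>UNIV. exp (- (\<mu> / 2) * (y$j \<bullet> y$j)))) * (- Fq \<mu> y))"
  have mu0: "\<mu> \<ge> 0" using mu by simp
  have pos: "Cs > 0" "A > 0" "Cg > 0" "Sc > 0" "Kc > 0"
    using s sg Q by (auto simp: Cs_def A_def Cg_def Sc_def Kc_def)
  have Gnn: "G y \<ge> 0" for y
    unfolding G_def using pos Fq_nonpos[OF mu0, of y] Q
    by (intro mult_nonneg_nonneg sum_nonneg) auto
  have PhiM: "(\<lambda>(w,x). ennreal (Phi \<sigma> s (w :: (real^'n)^'q) x)) \<in> borel_measurable (lborel \<Otimes>\<^sub>M lborel)"
    by (rule meas_pair) (intro continuous_intros)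
  have step1: "(\<integral>\<^sup>+w. (\<integral>\<^sup>+x. ennreal (Phi \<sigma> s (w :: (real^'n)^'q) x) \<partial>lborel) \<partial>lborel)
      = (\<integral>\<^sup>+x. (\<integral>\<^sup>+w. ennreal (Phi \<sigma> s (w :: (real^'n)^'q) x) \<partial>lborel) \<partial>lborel)"
    by (rule lborel_pair.Fubini'[OF PhiM, symmetric])
  have step2: "(\<integral>\<^sup>+w. ennreal (Phi \<sigma> s (w :: (real^'n)^'q) x) \<partial>lborel)
      = (\<integral>\<^sup>+y. ennreal (Sc * Phi \<sigma> s ((\<chi> l. x) + (- s) *\<^sub>R (y :: (real^'n)^'q)) x) \<partial>lborel)" for x
  proof -
    have m1: "(\<lambda>w. ennreal (Phi \<sigma> s (w :: (real^'n)^'q) x)) \<in> borel_measurable borel"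
    proof -
      have "continuous_on UNIV (\<lambda>w. Phi \<sigma> s (w :: (real^'n)^'q) x)" by (intro continuous_intros)
      from meas_cont(1)[OF this] show ?thesis unfolding measurable_lborel2 .
    qed
    have m2: "(\<lambda>y. ennreal (Phi \<sigma> s ((\<chi> l. x) + (- s) *\<^sub>R (y :: (real^'n)^'q)) x)) \<in> borel_measurable lborel"
      by (rule meas_cont(1)) (intro continuous_intros)
    have "(\<integral>\<^sup>+w. ennreal (Phi \<sigma> s (w :: (real^'n)^'q) x) \<partial>lborel)
        = ennreal (\<bar>- s\<bar> ^ DIM((real^'n)^'q)) * (\<integral>\<^sup>+y. ennreal (Phi \<sigma> s ((\<chi> l. x) + (- s) *\<^sub>R (y :: (real^'n)^'q)) x) \<partial>lborel)"
      using nn_affine[OF m1, of "- s" "(\<chi> l. x)"] s by simp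
    also have "\<dots> = (\<integral>\<^sup>+y. ennreal Sc * ennreal (Phi \<sigma> s ((\<chi> l. x) + (- s) *\<^sub>R (y :: (real^'n)^'q)) x) \<partial>lborel)"
      unfolding nn_integral_cmult[OF m2] using s by (simp add: Sc_def)
    also have "\<dots> = (\<integral>\<^sup>+y. ennreal (Sc * Phi \<sigma> s ((\<chi> l. x) + (- s) *\<^sub>R (y :: (real^'n)^'q)) x) \<partial>lborel)"
      using pos by (simp add: ennreal_mult')
    finally show ?thesis .
  qed
  have HM: "(\<lambda>(x,y). ennreal (Sc * Phi \<sigma> s ((\<chi> l. x) + (- s) *\<^sub>R (y :: (real^'n)^'q)) x)) \<in> borel_measurable (lborel \<Otimes>\<^sub>M lborel)"
    by (rule meas_pair[of "\<lambda>x y. Sc * Phi \<sigma> s ((\<chi> l. x) + (- s) *\<^sub>R (y :: (real^'n)^'q)) x"]) (intro continuous_intros)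
  have step3: "(\<integral>\<^sup>+x. (\<integral>\<^sup>+y. ennreal (Sc * Phi \<sigma> s ((\<chi> l. x) + (- s) *\<^sub>R (y :: (real^'n)^'q)) x) \<partial>lborel) \<partial>lborel)
     = (\<integral>\<^sup>+y. (\<integral>\<^sup>+x. ennreal (Sc * Phi \<sigma> s ((\<chi> l. x) + (- s) *\<^sub>R (y :: (real^'n)^'q)) x) \<partial>lborel) \<partial>lborel)"
    by (rule lborel_pair.Fubini'[OF HM, symmetric])
  have step4: "(\<integral>\<^sup>+x. ennreal (Sc * Phi \<sigma> s ((\<chi> l. x) + (- s) *\<^sub>R (y :: (real^'n)^'q)) x) \<partial>lborel)
     = ennreal (Sc * G y * Cg)" for y
  proof -
    define t where "t = (s / Q) *\<^sub>R (\<Sum>l\<in>UNIV. y$l)"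
    have "(\<integral>\<^sup>+x. ennreal (Sc * Phi \<sigma> s ((\<chi> l. x) + (- s) *\<^sub>R (y :: (real^'n)^'q)) x) \<partial>lborel)
       = (\<integral>\<^sup>+x. ennreal (Sc * G y) * ennreal (gau (s / sqrt Q) (x - t)) \<partial>lborel)"
    proof (intro nn_integral_cong)
      fix x :: "real^'n"
      have pe: "Sc * Phi \<sigma> s ((\<chi> l. x) + (- s) *\<^sub>R y) x = (Sc * G y) * gau (s / sqrt Q) (x - t)"
        unfolding Phi_subst[OF s sg mu, of x y] G_def t_def Q_def Cs_def A_def by (simp add: algebra_simps)
      have "0 \<le> Sc * G y" using pos Gnn[of y] by simp
      then show "ennreal (Sc * Phi \<sigma> s ((\<chi> l. x) + (- s) *\<^sub>R y) x) = ennreal (Sc * G y) * ennreal (gau (s / sqrt Q) (x - t))"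
        unfolding pe by (rule ennreal_mult')
    qed
    also have "\<dots> = ennreal (Sc * G y) * (\<integral>\<^sup>+x. ennreal (gau (s / sqrt Q) (x - t)) \<partial>lborel)"
      by (rule nn_integral_cmult) (rule meas_cont(1), intro continuous_intros)
    also have "(\<integral>\<^sup>+x. ennreal (gau (s / sqrt Q) (x - t)) \<partial>lborel) = ennreal Cg"
      unfolding gau_def Cg_def using gauss_nn[of "s / sqrt Q" t] s Q by simp
    finally show ?thesis using pos Gnn[of y] by (simp add: ennreal_mult'[symmetric] mult.assoc)
  qed
  have step5: "Sc * G y * Cg = (\<Sum>j\<in>UNIV. (Kc / Q) * (exp (- (1/2) * quad_form (Mq \<mu> j) y) * (- Fq \<mu> y)))" for y
  proof -
    have e: "exp (- (1/2) * quad_form (Mq \<mu> j) y) = exp (- Dq y / 2) * exp (- (\<mu> / 2) * (y$j \<bullet> y$j))" for j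
      by (simp add: quad_eq Dq_def mult_exp_exp algebra_simps)
    show ?thesis
      unfolding e G_def Kc_def
      by (simp add: sum_distrib_left sum_distrib_right sum_divide_distrib algebra_simps)
  qed
  have mR: "(\<lambda>y. ennreal (exp (- (1/2) * quad_form (Mq \<mu> j) y) * (- Fq \<mu> (y :: (real^'n)^'q)))) \<in> borel_measurable lborel" for j
    by (rule meas_cont(1)) (intro continuous_intros)
  have nnq: "0 \<le> exp (- (1/2) * quad_form (Mq \<mu> j) y) * (- Fq \<mu> (y :: (real^'n)^'q))" for j y
    using Fq_nonpos[OF mu0, of y] by (intro mult_nonneg_nonneg) auto
  have step6: "(\<integral>\<^sup>+y. ennreal (Sc * G y * Cg) \<partial>lborel) = (\<Sum>j\<in>(UNIV::'q set). ennreal (Kc / Q) * R j)"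
  proof -
    have "(\<integral>\<^sup>+y. ennreal (Sc * G y * Cg) \<partial>lborel)
       = (\<integral>\<^sup>+y. (\<Sum>j\<in>(UNIV::'q set). ennreal (Kc / Q) * ennreal (exp (- (1/2) * quad_form (Mq \<mu> j) y) * (- Fq \<mu> (y :: (real^'n)^'q)))) \<partial>lborel)"
      unfolding step5
    proof (intro nn_integral_cong)
      fix y :: "(real^'n)^'q"
      have kq: "0 \<le> Kc / Q" using pos Q by simp
      have "ennreal (\<Sum>j\<in>UNIV. Kc / Q * (exp (- (1/2) * quad_form (Mq \<mu> j) y) * (- Fq \<mu> y)))
          = (\<Sum>j\<in>UNIV. ennreal (Kc / Q * (exp (- (1/2) * quad_form (Mq \<mu> j) y) * (- Fq \<mu> y))))"
        by (rule sum_ennreal[symmetric], rule mult_nonneg_nonneg[OF kq nnq])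
      also have "\<dots> = (\<Sum>j\<in>UNIV. ennreal (Kc / Q) * ennreal (exp (- (1/2) * quad_form (Mq \<mu> j) y) * (- Fq \<mu> y)))"
        by (intro sum.cong refl ennreal_mult' kq)
      finally show "ennreal (\<Sum>j\<in>UNIV. Kc / Q * (exp (- (1/2) * quad_form (Mq \<mu> j) y) * (- Fq \<mu> y)))
          = (\<Sum>j\<in>UNIV. ennreal (Kc / Q) * ennreal (exp (- (1/2) * quad_form (Mq \<mu> j) y) * (- Fq \<mu> y)))" .
    qed
    also have "\<dots> = (\<Sum>j\<in>(UNIV::'q set). (\<integral>\<^sup>+y. ennreal (Kc / Q) * ennreal (exp (- (1/2) * quad_form (Mq \<mu> j) y) * (- Fq \<mu> (y :: (real^'n)^'q))) \<partial>lborel))"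
      by (rule nn_integral_sum) (use mR in auto)
    also have "\<dots> = (\<Sum>j\<in>(UNIV::'q set). ennreal (Kc / Q) * R j)"
      unfolding R_def by (intro sum.cong refl nn_integral_cmult mR)
    finally show ?thesis .
  qed
  have Rj: "R j = R jq" for j unfolding R_def by (rule R_perm)
  have step7: "(\<Sum>j\<in>(UNIV::'q set). ennreal (Kc / Q) * R j) = ennreal Kc * R jq"
  proof -
    have "(\<Sum>j\<in>(UNIV::'q set). ennreal (Kc / Q) * R j) = (\<Sum>j\<in>(UNIV::'q set). ennreal (Kc / Q) * R jq)"
      by (intro sum.cong refl) (metis Rj)
    also have "\<dots> = of_nat CARD('q) * (ennreal (Kc / Q) * R jq)"
      by (rule sum_constant)
    also have "\<dots> = (of_nat CARD('q) * ennreal (Kc / Q)) * R jq"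
      by (rule mult.assoc[symmetric])
    also have "of_nat CARD('q) * ennreal (Kc / Q) = ennreal (Q * (Kc / Q))"
      using Q pos unfolding Q_def by (simp add: ennreal_of_nat_eq_real_of_nat ennreal_mult'[symmetric])
    also have "Q * (Kc / Q) = Kc" using Q by simp
    finally show ?thesis .
  qed
  have "(\<integral>\<^sup>+w. (\<integral>\<^sup>+x. ennreal (Phi \<sigma> s (w :: (real^'n)^'q) x) \<partial>lborel) \<partial>lborel) = ennreal Kc * R jq"
    unfolding step1 step2 step3 step4 step6 step7 ..
  then show ?thesis by (simp add: Kc_def Sc_def Cs_def A_def Cg_def Q_def R_def)
qed



lemma Kc_eq:
  assumes s: "s > 0" and sg: "\<sigma> > 0" and mu: "\<mu> = s\<^sup>2 / \<sigma>\<^sup>2" and Q: "Q \<ge> 1"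
  shows "s ^ (Q * N) * (1 / sqrt (2 * pi * s\<^sup>2)) ^ (Q * N) * (2 * pi * \<sigma>\<^sup>2) powr (- real N / 2)
       * sqrt (2*pi*(s / sqrt (real Q))\<^sup>2) ^ N
     = (\<mu> / real Q) powr (real N / 2) * (2 * pi) powr (- real Q * real N / 2)"
proof -
  have Qp: "real Q > 0" using Q by simp
  have a: "s ^ (Q * N) * (1 / sqrt (2 * pi * s\<^sup>2)) ^ (Q * N) = (1 / sqrt (2 * pi)) ^ (Q * N)"
    using s by (simp add: power_mult_distrib[symmetric] real_sqrt_mult)
  have b: "(1 / sqrt (2 * pi)) ^ (Q * N) = (2 * pi) powr (- real Q * real N / 2)"
    by (simp add: power_one_over sqrt_pow_powr powr_minus_divide)
  have c: "sqrt (2*pi*(s / sqrt (real Q))\<^sup>2) ^ N = (2*pi*(s\<^sup>2 / real Q)) powr (real N / 2)"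
    using s Qp by (simp add: sqrt_pow_powr power_divide)
  have d: "(2 * pi * \<sigma>\<^sup>2) powr (- real N / 2) * (2*pi*(s\<^sup>2 / real Q)) powr (real N / 2)
      = (\<mu> / real Q) powr (real N / 2)"
  proof -
    have "(2*pi*(s\<^sup>2 / real Q)) = (2 * pi * \<sigma>\<^sup>2) * (\<mu> / real Q)"
      using sg by (simp add: mu field_simps)
    then have "(2*pi*(s\<^sup>2 / real Q)) powr (real N / 2) = (2 * pi * \<sigma>\<^sup>2) powr (real N / 2) * (\<mu> / real Q) powr (real N / 2)"
      by (simp only:, intro powr_mult)
    then show ?thesis using sg by (simp add: powr_minus field_simps)
  qed
  show ?thesis
    unfolding a b c using d by (simp add: algebra_simps)
qed



lemma meas_pair_real:
  fixes f :: "'a::euclidean_space \<Rightarrow> 'b::euclidean_space \<Rightarrow> real"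
  assumes "continuous_on UNIV (\<lambda>p. f (fst p) (snd p))"
  shows "(\<lambda>(a,b). f a b) \<in> borel_measurable (lborel \<Otimes>\<^sub>M lborel)"
proof -
  have "(\<lambda>p. f (fst p) (snd p)) \<in> borel_measurable borel"
    by (rule borel_measurable_continuous_onI[OF assms])
  then show ?thesis unfolding lborel_prod measurable_lborel2 by (simp add: case_prod_beta')
qed

theorem corollary1:
  fixes \<sigma> s \<mu> :: real and jq :: "'q::finite"
  assumes "\<sigma> > 0" and "s > 0" and "\<mu> = s\<^sup>2 / \<sigma>\<^sup>2"
  shows "cond_entropy \<sigma> s TYPE('n::finite) TYPE('q) =
           real CARD('n) / 2 * ln (2 * pi * \<sigma>\<^sup>2)
           - (\<mu> / real CARD('q)) powr (real CARD('n) / 2)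
             * (2 * pi) powr (- real CARD('q) * real CARD('n) / 2)
             * (\<integral>z. exp (- (1/2) * quad_form (Mq \<mu> jq) (z :: (real^'n)^'q)) * Fq \<mu> z \<partial>lborel)"
proof -
  note sg = assms(1) and s = assms(2) and mu = assms(3)
  define L where "L = real CARD('n) / 2 * ln (2 * pi * \<sigma>\<^sup>2)"
  define E where "E = (\<lambda>w::(real^'n)^'q. \<integral>x. mix_density \<sigma> w x * (- ln (Ssum \<sigma> w x)) \<partial>lborel)"
  define c where "c = (\<lambda>w::(real^'n)^'q. centres_density s w)"
  define Kc where "Kc = s ^ (CARD('q) * CARD('n)) * (1 / sqrt (2 * pi * s\<^sup>2)) ^ (CARD('q) * CARD('n)) * (2 * pi * \<sigma>\<^sup>2) powr (- real CARD('n) / 2)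
       * sqrt (2*pi*(s / sqrt (real CARD('q)))\<^sup>2) ^ CARD('n)"
  define h where "h = (\<lambda>y::(real^'n)^'q. exp (- (1/2) * quad_form (Mq \<mu> jq) y) * (- Fq \<mu> y))"
  define Cs where "Cs = (1 / sqrt (2 * pi * s\<^sup>2)) ^ (CARD('q) * CARD('n))"
  have mu0: "\<mu> \<ge> 0" using mu by simp
  have Kc_pos: "Kc > 0" using s sg by (simp add: Kc_def)
  have Kc_val: "Kc = (\<mu> / real CARD('q)) powr (real CARD('n) / 2) * (2 * pi) powr (- real CARD('q) * real CARD('n) / 2)"
    unfolding Kc_def by (rule Kc_eq[OF s sg mu]) simp
  have c_eq: "c w = Cs * gau s (w - 0)" for w
    unfolding c_def Cs_def centres_eq[OF s] gau_def by simp
  have c_nn: "c w \<ge> 0" for w using c_eq[of w] by (simp add: Cs_def gau_pos less_imp_le)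
  have c_int: "integrable lborel c"
    unfolding c_eq[abs_def] by (intro integrable_mult_right gau_int s)
  have c_one: "(\<integral>w. c w \<partial>lborel) = 1"
  proof -
    have "(\<integral>w. c w \<partial>lborel) = Cs * sqrt (2*pi* s\<^sup>2) ^ (CARD('q) * CARD('n))"
      unfolding c_eq using gau_integral[OF s, of "0 :: (real^'n)^'q"] by simp
    also have "\<dots> = 1" unfolding Cs_def using s by (simp add: power_mult_distrib[symmetric])
    finally show ?thesis .
  qed
  have c_meas: "c \<in> borel_measurable lborel"
    unfolding c_def by (rule meas_cont(2)) (intro continuous_intros)
  have E_meas: "E \<in> borel_measurable lborel"
  proof -
    have "(\<lambda>(w,x). mix_density \<sigma> (w :: (real^'n)^'q) x * (- ln (Ssum \<sigma> w x))) \<in> borel_measurable (lborel \<Otimes>\<^sub>M lborel)"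
      by (rule meas_pair_real[of "\<lambda>w x. mix_density \<sigma> (w :: (real^'n)^'q) x * (- ln (Ssum \<sigma> w x))"])
         (unfold mix_eq, intro continuous_intros)
    then show ?thesis unfolding E_def by (rule lborel.borel_measurable_lebesgue_integral)
  qed
  have E_nn: "0 \<le> E w" and E_le: "E w \<le> Bnd \<sigma> CARD('n) CARD('q)" for w
    unfolding E_def using ent_int[OF sg, of w] by auto
  have cE_int: "integrable lborel (\<lambda>w. c w * E w)"
  proof (rule Bochner_Integration.integrable_bound[where f = "\<lambda>w. c w * Bnd \<sigma> CARD('n) CARD('q)"])
    show "integrable lborel (\<lambda>w. c w * Bnd \<sigma> CARD('n) CARD('q))"
      by (intro integrable_mult_left c_int)
    show "(\<lambda>w. c w * E w) \<in> borel_measurable lborel"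
      using c_meas E_meas by measurable
    show "AE w in lborel. norm (c w * E w) \<le> norm (c w * Bnd \<sigma> CARD('n) CARD('q))"
    proof (rule AE_I2)
      fix w
      have "0 \<le> c w * E w" using c_nn E_nn by simp
      moreover have "c w * E w \<le> c w * Bnd \<sigma> CARD('n) CARD('q)"
        using c_nn E_le by (intro mult_left_mono)
      ultimately show "norm (c w * E w) \<le> norm (c w * Bnd \<sigma> CARD('n) CARD('q))" by simp
    qed
  qed
  have lhs: "cond_entropy \<sigma> s TYPE('n) TYPE('q) = L + (\<integral>w. c w * E w \<partial>lborel)"
  proof -
    have "cond_entropy \<sigma> s TYPE('n) TYPE('q) = (\<integral>w. c w * L + c w * E w \<partial>lborel)"
      unfolding cond_entropy_def
      by (intro Bochner_Integration.integral_cong refl) (simp add: dent_eq[OF sg] c_def E_def L_def algebra_simps)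
    also have "\<dots> = (\<integral>w. c w * L \<partial>lborel) + (\<integral>w. c w * E w \<partial>lborel)"
      by (intro Bochner_Integration.integral_add integrable_mult_left c_int cE_int)
    also have "(\<integral>w. c w * L \<partial>lborel) = L" using c_one by simp
    finally show ?thesis .
  qed
  have nnE: "ennreal (\<integral>w. c w * E w \<partial>lborel) = ennreal Kc * (\<integral>\<^sup>+y. ennreal (h y) \<partial>lborel)"
  proof -
    have "ennreal (\<integral>w. c w * E w \<partial>lborel) = (\<integral>\<^sup>+w. ennreal (c w * E w) \<partial>lborel)"
      by (rule nn_integral_eq_integral[symmetric]) (use cE_int c_nn E_nn in auto)
    also have "\<dots> = (\<integral>\<^sup>+w. (\<integral>\<^sup>+x. ennreal (Phi \<sigma> s (w :: (real^'n)^'q) x) \<partial>lborel) \<partial>lborel)"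
    proof (intro nn_integral_cong)
      fix w :: "(real^'n)^'q"
      have m: "(\<lambda>x. ennreal (mix_density \<sigma> w x * (- ln (Ssum \<sigma> w x)))) \<in> borel_measurable lborel"
        by (rule meas_cont(1)) (unfold mix_eq, intro continuous_intros)
      have nn2: "0 \<le> mix_density \<sigma> w x * (- ln (Ssum \<sigma> w x))" for x
        using Ssum_le1[of \<sigma> w x] Ssum_pos[of \<sigma> w x] sg
        by (intro mult_nonneg_nonneg) (auto simp: mix_eq less_imp_le)
      have "ennreal (c w * E w) = ennreal (c w) * ennreal (E w)"
        using c_nn by (simp add: ennreal_mult')
      also have "ennreal (E w) = (\<integral>\<^sup>+x. ennreal (mix_density \<sigma> w x * (- ln (Ssum \<sigma> w x))) \<partial>lborel)"
        unfolding E_def by (rule nn_integral_eq_integral[symmetric]) (use ent_int(1)[OF sg, of w] nn2 in auto)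
      also have "ennreal (c w) * \<dots> = (\<integral>\<^sup>+x. ennreal (c w) * ennreal (mix_density \<sigma> w x * (- ln (Ssum \<sigma> w x))) \<partial>lborel)"
        by (rule nn_integral_cmult[OF m, symmetric])
      also have "\<dots> = (\<integral>\<^sup>+x. ennreal (Phi \<sigma> s w x) \<partial>lborel)"
        by (intro nn_integral_cong) (simp add: Phi_def c_def ennreal_mult'[symmetric] c_nn[unfolded c_def] mult.assoc)
      finally show "ennreal (c w * E w) = (\<integral>\<^sup>+x. ennreal (Phi \<sigma> s w x) \<partial>lborel)" .
    qed
    also have "\<dots> = ennreal Kc * (\<integral>\<^sup>+y. ennreal (h y) \<partial>lborel)"
      unfolding Kc_def h_def by (rule main_nn[OF s sg mu])
    finally show ?thesis .
  qed
  have h_nn: "0 \<le> h y" for y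
    unfolding h_def using Fq_nonpos[OF mu0, of y] by (intro mult_nonneg_nonneg) auto
  have h_meas: "h \<in> borel_measurable lborel"
    unfolding h_def by (rule meas_cont(2)) (intro continuous_intros)
  have R_fin: "(\<integral>\<^sup>+y. ennreal (h y) \<partial>lborel) < \<infinity>"
  proof -
    have "ennreal Kc * (\<integral>\<^sup>+y. ennreal (h y) \<partial>lborel) < \<infinity>"
      unfolding nnE[symmetric] by simp
    then show ?thesis using Kc_pos by (auto simp: ennreal_mult_less_top)
  qed
  have h_int: "integrable lborel h"
    by (rule integrableI_nonneg[OF h_meas]) (use h_nn R_fin in auto)
  have Rv: "(\<integral>\<^sup>+y. ennreal (h y) \<partial>lborel) = ennreal (\<integral>y. h y \<partial>lborel)"
    by (rule nn_integral_eq_integral[OF h_int]) (use h_nn in auto)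
  have hI_nn: "0 \<le> (\<integral>y. h y \<partial>lborel)" by (rule integral_nonneg_AE) (use h_nn in auto)
  have cEI_nn: "0 \<le> (\<integral>w. c w * E w \<partial>lborel)"
    by (rule integral_nonneg_AE) (use c_nn E_nn in auto)
  have key: "(\<integral>w. c w * E w \<partial>lborel) = Kc * (\<integral>y. h y \<partial>lborel)"
  proof -
    have "ennreal (\<integral>w. c w * E w \<partial>lborel) = ennreal (Kc * (\<integral>y. h y \<partial>lborel))"
      unfolding nnE Rv using Kc_pos by (simp add: ennreal_mult')
    moreover have "0 \<le> Kc * (\<integral>y. h y \<partial>lborel)" using Kc_pos hI_nn by simp
    ultimately show ?thesis using ennreal_inj[OF cEI_nn] by blast
  qed
  have rhsI: "(\<integral>z. exp (- (1/2) * quad_form (Mq \<mu> jq) (z :: (real^'n)^'q)) * Fq \<mu> z \<partial>lborel) = - (\<integral>y. h y \<partial>lborel)"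
    unfolding h_def by (simp add: Bochner_Integration.integral_minus)
  show ?thesis
    unfolding lhs key rhsI Kc_val L_def by (simp add: algebra_simps)
qed


end
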